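(* Let $\Omega$ be a topological signature and $X$ a topological space such that $X$ and every $\Omega_n$ are 0-dimensional spaces. Then the topological algebra $T_\Omega(X)$ is residually finite. Moreover, the unique continuous homomorphism $T_\Omega(X)\to\overline{\Omega}_X\mathcal{S}t_\Omega$ extending the natural generating mapping $X\to\overline{\Omega}_X\mathcal{S}t_\Omega$ is injective and is a homeomorphism of $T_\Omega(X)$ onto the subalgebra of $\overline{\Omega}_X\mathcal{S}t_\Omega$ (algebraically) generated by the image of $X$.
   Context: A space is 0-dimensional if it is $T_1$ and its clopen subsets form a basis. $T_\Omega(X)$ is the term algebra (absolutely free $\Omega$-algebra) on $X$, whose elements are finite ordered trees with leaves labeled in $X\uplus\Omega_0$ and nodes with $k$ children labeled in $\Omega_k$; it is topologized as the topological sum, over all tree shapes, of the product of the label spaces of the nodes (a net converges to $t$ iff eventually it has the shape of $t$ and the labels at each node converge). It is a topological $\Omega$-algebra, and $X$ embeds as single-node trees. A topological algebra is residually finite if any two distinct elements are separated by a continuous homomorphism into a finite discrete topological $\Omega$-algebra. A Stone topological algebra is a topological $\Omega$-algebra (continuous evaluation maps $\Omega_n\times A^n\to A$) whose space is compact Hausdorff 0-dimensional; $\mathcal{S}t_\Omega$ is the class of all Stone topological $\Omega$-algebras. $\overline{\Omega}_X\mathcal{S}t_\Omega$ is the free Stone topological algebra over $X$: a Stone topological algebra with a continuous map $\iota:X\to\overline{\Omega}_X\mathcal{S}t_\Omega$ whose image generates a dense subalgebra, such that every continuous map from $X$ to a Stone topological $\Omega$-algebra $T$ extends uniquely as $\hat\varphi\circ\iota$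 with $\hat\varphi$ a continuous homomorphism. *)

theory Defs
  imports "HOL-Analysis.Analysis"
begin

text \<open>A topological signature is given as a family Om of topological spaces
  indexed by arity: the operation symbols of arity n are the points of
  topspace (Om n).\<close>

definition zero_dimensional :: "'a topology \<Rightarrow> bool" where
  "zero_dimensional T \<longleftrightarrow> t1_space T \<and>
     (\<forall>U x. openin T U \<and> x \<in> U \<longrightarrow>
        (\<exists>C. openin T C \<and> closedin T C \<and> x \<in> C \<and> C \<subseteq> U))"

definition topalg :: "(nat \<Rightarrow> 'o topology) \<Rightarrow> 'a topology \<Rightarrow> ('o \<Rightarrow> 'a list \<Rightarrow> 'a) \<Rightarrow> bool" where
  "topalg Om TA opA \<longleftrightarrow>
     (\<forall>n. continuous_map (prod_topology (Om n) (product_topology (\<lambda>_. TA) {..<n})) TA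
            (\<lambda>(f, g). opA f (map g [0..<n])))"

definition is_hom :: "(nat \<Rightarrow> 'o topology) \<Rightarrow> 'a topology \<Rightarrow> ('o \<Rightarrow> 'a list \<Rightarrow> 'a)
    \<Rightarrow> ('o \<Rightarrow> 'b list \<Rightarrow> 'b) \<Rightarrow> ('a \<Rightarrow> 'b) \<Rightarrow> bool" where
  "is_hom Om TA opA opB h \<longleftrightarrow>
     (\<forall>n f as. f \<in> topspace (Om n) \<and> length as = n \<and> set as \<subseteq> topspace TA \<longrightarrow>
        h (opA f as) = opB f (map h as))"

definition cont_hom :: "(nat \<Rightarrow> 'o topology) \<Rightarrow> 'a topology \<Rightarrow> ('o \<Rightarrow> 'a list \<Rightarrow> 'a)
    \<Rightarrow> 'b topology \<Rightarrow> ('o \<Rightarrow> 'b list \<Rightarrow> 'b) \<Rightarrow> ('a \<Rightarrow> 'b) \<Rightarrow> bool" where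
  "cont_hom Om TA opA TB opB h \<longleftrightarrow> continuous_map TA TB h \<and> is_hom Om TA opA opB h"

inductive_set gen_sub :: "(nat \<Rightarrow> 'o topology) \<Rightarrow> ('o \<Rightarrow> 'a list \<Rightarrow> 'a) \<Rightarrow> 'a set \<Rightarrow> 'a set"
  for Om opA S where
  gen_base: "x \<in> S \<Longrightarrow> x \<in> gen_sub Om opA S"
| gen_op: "f \<in> topspace (Om (length as)) \<Longrightarrow> \<forall>a\<in>set as. a \<in> gen_sub Om opA S
            \<Longrightarrow> opA f as \<in> gen_sub Om opA S"

definition finite_discrete_alg :: "(nat \<Rightarrow> 'o topology) \<Rightarrow> 'a set \<Rightarrow> ('o \<Rightarrow> 'a list \<Rightarrow> 'a) \<Rightarrow> bool" where
  "finite_discrete_alg Om A opA \<longleftrightarrow> finite A \<and> topalg Om (discrete_topology A) opA"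

text \<open>Residual finiteness; finite targets are taken with carrier in nat
  (every finite algebra is isomorphic to one of these).\<close>

definition residually_finite :: "(nat \<Rightarrow> 'o topology) \<Rightarrow> 'a topology \<Rightarrow> ('o \<Rightarrow> 'a list \<Rightarrow> 'a) \<Rightarrow> bool" where
  "residually_finite Om TA opA \<longleftrightarrow>
     (\<forall>a\<in>topspace TA. \<forall>b\<in>topspace TA. a \<noteq> b \<longrightarrow>
        (\<exists>(B :: nat set) opB h. finite_discrete_alg Om B opB \<and>
             cont_hom Om TA opA (discrete_topology B) opB h \<and> h a \<noteq> h b))"

definition stone_alg :: "(nat \<Rightarrow> 'o topology) \<Rightarrow> 'a topology \<Rightarrow> ('o \<Rightarrow> 'a list \<Rightarrow> 'a) \<Rightarrow> bool" where
  "stone_alg Om TA opA \<longleftrightarrow> topalg Om TA opA \<and> compact_space TA \<and> Hausdorff_space TA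
      \<and> zero_dimensional TA"

text \<open>Free Stone topological algebra over the space TX, with universal
  property with respect to all Stone topological algebras whose carrier lies
  in the type 'u (HOL cannot quantify over all types inside a formula).
  Uniqueness is uniqueness on the carrier.\<close>

definition free_stone_alg_wrt :: "'u itself \<Rightarrow> (nat \<Rightarrow> 'o topology) \<Rightarrow> 'x topology
    \<Rightarrow> 'f topology \<Rightarrow> ('o \<Rightarrow> 'f list \<Rightarrow> 'f) \<Rightarrow> ('x \<Rightarrow> 'f) \<Rightarrow> bool" where
  "free_stone_alg_wrt (_ :: 'u itself) Om TX TF opF \<iota> \<longleftrightarrow>
     stone_alg Om TF opF \<and> continuous_map TX TF \<iota> \<and>
     TF closure_of (gen_sub Om opF (\<iota> ` topspace TX)) = topspace TF \<and>
     (\<forall>(TT :: 'u topology) opT \<phi>. stone_alg Om TT opT \<and> continuous_map TX TT \<phi> \<longrightarrow>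
        (\<exists>h. cont_hom Om TF opF TT opT h \<and> (\<forall>x\<in>topspace TX. h (\<iota> x) = \<phi> x) \<and>
           (\<forall>h'. cont_hom Om TF opF TT opT h' \<and> (\<forall>x\<in>topspace TX. h' (\<iota> x) = \<phi> x) \<longrightarrow>
                 (\<forall>y\<in>topspace TF. h' y = h y))))"

datatype ('x, 'o) trm = Var 'x | App 'o "('x, 'o) trm list"

inductive_set trms :: "(nat \<Rightarrow> 'o topology) \<Rightarrow> 'x topology \<Rightarrow> ('x, 'o) trm set"
  for Om TX where
  trms_Var: "x \<in> topspace TX \<Longrightarrow> Var x \<in> trms Om TX"
| trms_App: "f \<in> topspace (Om (length ts)) \<Longrightarrow> \<forall>s\<in>set ts. s \<in> trms Om TX \<Longrightarrow> App f ts \<in> trms Om TX"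

text \<open>Patterns: a tree shape with a set at every node; a basic open set of
  the term topology is the set of terms of that shape whose labels lie in the
  given open sets.\<close>

datatype ('x, 'o) pat = PVar "'x set" | PApp "'o set" "('x, 'o) pat list"

fun matches :: "('x, 'o) pat \<Rightarrow> ('x, 'o) trm \<Rightarrow> bool" where
  "matches (PVar A) (Var x) \<longleftrightarrow> x \<in> A"
| "matches (PApp B ps) (App f ts) \<longleftrightarrow> f \<in> B \<and> list_all2 matches ps ts"
| "matches _ _ \<longleftrightarrow> False"

fun open_pat :: "(nat \<Rightarrow> 'o topology) \<Rightarrow> 'x topology \<Rightarrow> ('x, 'o) pat \<Rightarrow> bool" where
  "open_pat Om TX (PVar A) \<longleftrightarrow> openin TX A"
| "open_pat Om TX (PApp B ps) \<longleftrightarrow> openin (Om (length ps)) B \<and> (\<forall>p\<in>set ps. open_pat Om TX p)"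

definition trm_topology :: "(nat \<Rightarrow> 'o topology) \<Rightarrow> 'x topology \<Rightarrow> ('x, 'o) trm topology" where
  "trm_topology Om TX = topology (\<lambda>U. U \<subseteq> trms Om TX \<and>
     (\<forall>t\<in>U. \<exists>p. open_pat Om TX p \<and> matches p t \<and> {s \<in> trms Om TX. matches p s} \<subseteq> U))"

end

theory Submission
  imports Defs
begin

lemma pat_int:
  "matches p t \<Longrightarrow> matches q t \<Longrightarrow> open_pat Om TX p \<Longrightarrow> open_pat Om TX q \<Longrightarrow>
   \<exists>r. open_pat Om TX r \<and> matches r t \<and> (\<forall>s. matches r s \<longrightarrow> matches p s \<and> matches q s)"
proof (induction t arbitrary: p q)
  case (Var x)
  then obtain A A' where pq: "p = PVar A" "q = PVar A'"
    by (cases p; cases q; auto)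
  show ?case
    apply (rule exI[of _ "PVar (A \<inter> A')"])
    using Var pq apply auto
    subgoal for s by (cases s) auto
    subgoal for s by (cases s) auto
    done
next
  case (App f ts)
  then obtain B B' ps qs where pq: "p = PApp B ps" "q = PApp B' qs"
    by (cases p; cases q; auto)
  have l: "length ps = length ts" "length qs = length ts"
    using App.prems pq by (auto dest: list_all2_lengthD)
  have "\<forall>i<length ts. \<exists>r. open_pat Om TX r \<and> matches r (ts!i) \<and>
      (\<forall>s. matches r s \<longrightarrow> matches (ps!i) s \<and> matches (qs!i) s)"
  proof (intro allI impI)
    fix i assume i: "i < length ts"
    show "\<exists>r. open_pat Om TX r \<and> matches r (ts!i) \<and>
      (\<forall>s. matches r s \<longrightarrow> matches (ps!i) s \<and> matches (qs!i) s)"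
      apply (rule App.IH)
      using App.prems pq i l by (auto simp: list_all2_conv_all_nth)
  qed
  then obtain rs where rs: "length rs = length ts" "\<forall>i<length ts. open_pat Om TX (rs!i) \<and> matches (rs!i) (ts!i) \<and>
      (\<forall>s. matches (rs!i) s \<longrightarrow> matches (ps!i) s \<and> matches (qs!i) s)"
    unfolding Skolem_list_nth by blast
  show ?case
  proof (rule exI[of _ "PApp (B \<inter> B') rs"], intro conjI allI impI)
    show "open_pat Om TX (PApp (B \<inter> B') rs)"
      using App.prems pq rs l by (auto simp: in_set_conv_nth)
    show "matches (PApp (B \<inter> B') rs) (App f ts)"
      using App.prems pq rs l by (auto simp: list_all2_conv_all_nth)
    fix s assume s: "matches (PApp (B \<inter> B') rs) s"
    then obtain g ss where s': "s = App g ss" by (cases s) auto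
    show "matches p s" "matches q s"
      using s rs l pq unfolding s' by (auto simp: list_all2_conv_all_nth)
  qed
qed

primrec fullp :: "(nat \<Rightarrow> 'o topology) \<Rightarrow> 'x topology \<Rightarrow> ('x,'o) trm \<Rightarrow> ('x,'o) pat" where
  "fullp Om TX (Var x) = PVar (topspace TX)"
| "fullp Om TX (App f ts) = PApp (topspace (Om (length ts))) (map (fullp Om TX) ts)"

lemma open_fullp: "open_pat Om TX (fullp Om TX t)"
  by (induction t) auto

lemma matches_fullp: "t \<in> trms Om TX \<Longrightarrow> matches (fullp Om TX t) t"
  by (induction t rule: trms.induct) (auto simp: list_all2_conv_all_nth)

lemma list_matches_fullp: "\<forall>s\<in>set ts. s \<in> trms Om TX \<Longrightarrow> list_all2 matches (map (fullp Om TX) ts) ts"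
  by (auto simp: list_all2_conv_all_nth matches_fullp)

lemma trm_istopology:
  "istopology (\<lambda>U. U \<subseteq> trms Om TX \<and>
     (\<forall>t\<in>U. \<exists>p. open_pat Om TX p \<and> matches p t \<and> {s \<in> trms Om TX. matches p s} \<subseteq> U))"
  unfolding istopology_def
proof (rule conjI; (intro allI impI)?)
  fix S T assume S: "S \<subseteq> trms Om TX \<and>
     (\<forall>t\<in>S. \<exists>p. open_pat Om TX p \<and> matches p t \<and> {s \<in> trms Om TX. matches p s} \<subseteq> S)"
    and T: "T \<subseteq> trms Om TX \<and>
     (\<forall>t\<in>T. \<exists>p. open_pat Om TX p \<and> matches p t \<and> {s \<in> trms Om TX. matches p s} \<subseteq> T)"
  show "S \<inter> T \<subseteq> trms Om TX \<and>
     (\<forall>t\<in>S \<inter> T. \<exists>p. open_pat Om TX p \<and> matches p t \<and> {s \<in> trms Om TX. matches p s} \<subseteq> S \<inter> T)"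
  proof (intro conjI ballI)
    show "S \<inter> T \<subseteq> trms Om TX" using S by auto
    fix t assume "t \<in> S \<inter> T"
    then obtain p q where "open_pat Om TX p" "matches p t" "{s \<in> trms Om TX. matches p s} \<subseteq> S"
      "open_pat Om TX q" "matches q t" "{s \<in> trms Om TX. matches q s} \<subseteq> T"
      using S T by blast
    with pat_int[of p t q Om TX] show "\<exists>p. open_pat Om TX p \<and> matches p t \<and> {s \<in> trms Om TX. matches p s} \<subseteq> S \<inter> T"
      by blast
  qed
next
  fix K assume "\<forall>U\<in>K. U \<subseteq> trms Om TX \<and>
     (\<forall>t\<in>U. \<exists>p. open_pat Om TX p \<and> matches p t \<and> {s \<in> trms Om TX. matches p s} \<subseteq> U)"
  then show "\<Union>K \<subseteq> trms Om TX \<and>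
     (\<forall>t\<in>\<Union>K. \<exists>p. open_pat Om TX p \<and> matches p t \<and> {s \<in> trms Om TX. matches p s} \<subseteq> \<Union>K)"
    by (smt (verit) UnionE Union_upper subset_iff)
qed

lemma openin_trm:
  "openin (trm_topology Om TX) U \<longleftrightarrow> U \<subseteq> trms Om TX \<and>
     (\<forall>t\<in>U. \<exists>p. open_pat Om TX p \<and> matches p t \<and> {s \<in> trms Om TX. matches p s} \<subseteq> U)"
  unfolding trm_topology_def using trm_istopology[of Om TX]
  by (simp add: topology_inverse')

lemma openin_pat: "open_pat Om TX p \<Longrightarrow> openin (trm_topology Om TX) {s \<in> trms Om TX. matches p s}"
  unfolding openin_trm by auto

lemma topspace_trm [simp]: "topspace (trm_topology Om TX) = trms Om TX"
proof
  show "topspace (trm_topology Om TX) \<subseteq> trms Om TX"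
    by (metis openin_topspace openin_trm)
  show "trms Om TX \<subseteq> topspace (trm_topology Om TX)"
  proof
    fix t assume t: "t \<in> trms Om TX"
    have "openin (trm_topology Om TX) {s \<in> trms Om TX. matches (fullp Om TX t) s}"
      by (rule openin_pat[OF open_fullp])
    from openin_subset[OF this] show "t \<in> topspace (trm_topology Om TX)"
      using t matches_fullp[OF t] by blast
  qed
qed

lemma trms_App_iff: "App f ts \<in> trms Om TX \<longleftrightarrow> f \<in> topspace (Om (length ts)) \<and> (\<forall>s\<in>set ts. s \<in> trms Om TX)"
  by (auto elim: trms.cases intro: trms.intros)

lemma trms_Var_iff: "Var x \<in> trms Om TX \<longleftrightarrow> x \<in> topspace TX"
  by (auto elim: trms.cases intro: trms.intros)

lemma pat_sep:
  assumes T1: "t1_space TX" "\<And>n. t1_space (Om n)"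
  shows "a \<in> trms Om TX \<Longrightarrow> b \<in> trms Om TX \<Longrightarrow> a \<noteq> b \<Longrightarrow>
    \<exists>p. open_pat Om TX p \<and> matches p a \<and> \<not> matches p b"
proof (induction a arbitrary: b rule: trms.induct)
  case (trms_Var x)
  show ?case
  proof (cases b)
    case (Var y)
    with trms_Var have "y \<in> topspace TX" "x \<noteq> y" by (auto simp: trms_Var_iff)
    with T1(1) trms_Var obtain U where "openin TX U" "x \<in> U" "y \<notin> U"
      unfolding t1_space_def by blast
    then show ?thesis using Var by (intro exI[of _ "PVar U"]) auto
  next
    case (App g ss)
    then show ?thesis using trms_Var by (intro exI[of _ "PVar (topspace TX)"]) auto
  qed
next
  case (trms_App f ts)
  have at: "App f ts \<in> trms Om TX" using trms_App by (auto simp: trms_App_iff)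
  show ?case
  proof (cases b)
    case (Var y)
    then show ?thesis using at
      by (intro exI[of _ "fullp Om TX (App f ts)"]) (auto simp: open_fullp list_matches_fullp trms_App_iff)
  next
    case (App g ss)
    note b = trms_App.prems(1)[unfolded App trms_App_iff]
    show ?thesis
    proof (cases "length ss = length ts")
      case False
      then show ?thesis using at App
        by (intro exI[of _ "fullp Om TX (App f ts)"]) (auto simp: open_fullp list_matches_fullp trms_App_iff dest: list_all2_lengthD)
    next
      case len: True
      show ?thesis
      proof (cases "f = g")
        case False
        with T1(2)[of "length ts"] b len trms_App obtain W where
          W: "openin (Om (length ts)) W" "f \<in> W" "g \<notin> W"
          unfolding t1_space_def by metis
        show ?thesis
          using W App trms_App
          by (intro exI[of _ "PApp W (map (fullp Om TX) ts)"])
             (auto simp: open_fullp matches_fullp list_all2_conv_all_nth)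
      next
        case True
        with trms_App.prems App have "ts \<noteq> ss" by auto
        with len obtain i where i: "i < length ts" "ts!i \<noteq> ss!i"
          using nth_equalityI by metis
        have "\<exists>p. open_pat Om TX p \<and> matches p (ts!i) \<and> \<not> matches p (ss!i)"
        proof -
          have "ts!i \<in> set ts" "ss!i \<in> set ss" using i len by auto
          then show ?thesis using trms_App(2) i b by blast
        qed
        then obtain p where p: "open_pat Om TX p" "matches p (ts!i)" "\<not> matches p (ss!i)" by blast
        show ?thesis
        proof (intro exI[of _ "PApp (topspace (Om (length ts))) ((map (fullp Om TX) ts)[i := p])"] conjI)
          show "open_pat Om TX (PApp (topspace (Om (length ts))) ((map (fullp Om TX) ts)[i := p]))"
            using p by (auto simp: open_fullp dest!: set_update_subset_insert[THEN subsetD])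
          show "matches (PApp (topspace (Om (length ts))) ((map (fullp Om TX) ts)[i := p])) (App f ts)"
          proof -
            have "list_all2 matches ((map (fullp Om TX) ts)[i := p]) ts"
              unfolding list_all2_conv_all_nth using p trms_App(2) i
              by (auto simp: nth_list_update intro!: matches_fullp simp del: fullp.simps)
            then show ?thesis using trms_App(1) by simp
          qed
          show "\<not> matches (PApp (topspace (Om (length ts))) ((map (fullp Om TX) ts)[i := p])) b"
            using p i len App by (auto simp: list_all2_conv_all_nth)
        qed
      qed
    qed
  qed
qed

fun clopen_pat :: "(nat \<Rightarrow> 'o topology) \<Rightarrow> 'x topology \<Rightarrow> ('x, 'o) pat \<Rightarrow> bool" where
  "clopen_pat Om TX (PVar A) \<longleftrightarrow> openin TX A \<and> closedin TX A"
| "clopen_pat Om TX (PApp B ps) \<longleftrightarrow> openin (Om (length ps)) B \<and> closedin (Om (length ps)) B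
     \<and> (\<forall>p\<in>set ps. clopen_pat Om TX p)"

lemma clopen_open_pat: "clopen_pat Om TX p \<Longrightarrow> open_pat Om TX p"
  by (induction p) auto

lemma matches_PApp_D: "matches (PApp B ps) s \<Longrightarrow> \<exists>g ss. s = App g ss \<and> g \<in> B \<and> list_all2 matches ps ss"
  by (cases s) auto

lemma matches_PVar_D: "matches (PVar A) s \<Longrightarrow> \<exists>x. s = Var x \<and> x \<in> A"
  by (cases s) auto

lemma clopen_refine:
  assumes Z: "zero_dimensional TX" "\<And>n. zero_dimensional (Om n)"
  shows "t \<in> trms Om TX \<Longrightarrow> open_pat Om TX p \<Longrightarrow> matches p t \<Longrightarrow>
    \<exists>q. clopen_pat Om TX q \<and> matches q t \<and> (\<forall>s. matches q s \<longrightarrow> matches p s)"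
proof (induction t arbitrary: p rule: trms.induct)
  case (trms_Var x)
  then obtain A where p: "p = PVar A" "x \<in> A" "openin TX A" by (cases p) auto
  with Z(1) obtain C where "openin TX C" "closedin TX C" "x \<in> C" "C \<subseteq> A"
    unfolding zero_dimensional_def by blast
  then show ?case using p
    by (intro exI[of _ "PVar C"]) (auto dest!: matches_PVar_D)
next
  case (trms_App f ts)
  then obtain B ps where p: "p = PApp B ps" "f \<in> B" "openin (Om (length ps)) B"
      "list_all2 matches ps ts" "\<forall>q\<in>set ps. open_pat Om TX q" by (cases p) auto
  have len: "length ps = length ts" using p by (auto dest: list_all2_lengthD)
  from Z(2)[of "length ts"] p len obtain C where C: "openin (Om (length ts)) C" "closedin (Om (length ts)) C" "f \<in> C" "C \<subseteq> B"
    unfolding zero_dimensional_def by metis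
  have "\<forall>i<length ts. \<exists>q. clopen_pat Om TX q \<and> matches q (ts!i) \<and> (\<forall>s. matches q s \<longrightarrow> matches (ps!i) s)"
  proof (intro allI impI)
    fix i assume i: "i < length ts"
    have "ts!i \<in> set ts" "ps!i \<in> set ps" using i len by auto
    moreover have "matches (ps!i) (ts!i)" using p i by (auto simp: list_all2_conv_all_nth)
    ultimately show "\<exists>q. clopen_pat Om TX q \<and> matches q (ts!i) \<and> (\<forall>s. matches q s \<longrightarrow> matches (ps!i) s)"
      using trms_App(2) p by blast
  qed
  then obtain qs where qs: "length qs = length ts" "\<forall>i<length ts. clopen_pat Om TX (qs!i) \<and> matches (qs!i) (ts!i) \<and> (\<forall>s. matches (qs!i) s \<longrightarrow> matches (ps!i) s)"
    unfolding Skolem_list_nth by blast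
  show ?case
  proof (intro exI[of _ "PApp C qs"] conjI allI impI)
    show "clopen_pat Om TX (PApp C qs)" using qs C by (auto simp: in_set_conv_nth)
    show "matches (PApp C qs) (App f ts)" using qs C by (auto simp: list_all2_conv_all_nth)
    fix s assume "matches (PApp C qs) s"
    then obtain g ss where s: "s = App g ss" "g \<in> C" "list_all2 matches qs ss" by (auto dest: matches_PApp_D)
    then show "matches p s" using qs C p len by (auto simp: list_all2_conv_all_nth)
  qed
qed

lemma clopen_const:
  "s \<in> trms Om TX \<Longrightarrow> clopen_pat Om TX r \<Longrightarrow> \<exists>p. open_pat Om TX p \<and> matches p s \<and>
     (\<forall>s'\<in>trms Om TX. matches p s' \<longrightarrow> (matches r s' \<longleftrightarrow> matches r s))"
proof (induction s arbitrary: r rule: trms.induct)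
  case (trms_Var x)
  show ?case
  proof (cases r)
    case (PVar A)
    show ?thesis
    proof (cases "x \<in> A")
      case True
      then show ?thesis using PVar trms_Var by (intro exI[of _ "PVar A"]) (auto dest: matches_PVar_D)
    next
      case False
      then show ?thesis using PVar trms_Var
        by (intro exI[of _ "PVar (topspace TX - A)"]) (auto dest: matches_PVar_D)
    qed
  next
    case (PApp B ps)
    then show ?thesis using trms_Var
      by (intro exI[of _ "PVar (topspace TX)"]) (auto dest: matches_PVar_D)
  qed
next
  case (trms_App f ts)
  have at: "App f ts \<in> trms Om TX" using trms_App by (auto simp: trms_App_iff)
  show ?case
  proof (cases r)
    case (PVar A)
    then show ?thesis using at
      by (intro exI[of _ "fullp Om TX (App f ts)"]) (auto simp: open_fullp list_matches_fullp trms_App_iff dest: matches_PApp_D)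
  next
    case (PApp B rs)
    show ?thesis
    proof (cases "length rs = length ts")
      case False
      then show ?thesis using at PApp
        by (intro exI[of _ "fullp Om TX (App f ts)"])
          (auto simp: open_fullp list_matches_fullp trms_App_iff dest!: matches_PApp_D list_all2_lengthD)
    next
      case len: True
      define W where "W = (if f \<in> B then B else topspace (Om (length ts)) - B)"
      have W: "openin (Om (length ts)) W" "f \<in> W" "\<forall>g\<in>W. g \<in> B \<longleftrightarrow> f \<in> B"
        using trms_App.prems PApp len trms_App(1) by (auto simp: W_def)
      have "\<forall>i<length ts. \<exists>p. open_pat Om TX p \<and> matches p (ts!i) \<and>
         (\<forall>s'\<in>trms Om TX. matches p s' \<longrightarrow> (matches (rs!i) s' \<longleftrightarrow> matches (rs!i) (ts!i)))"
      proof (intro allI impI)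
        fix i assume i: "i < length ts"
        have "ts!i \<in> set ts" "rs!i \<in> set rs" using i len by auto
        moreover have "clopen_pat Om TX (rs!i)" using trms_App.prems(1) PApp \<open>rs!i \<in> set rs\<close> by simp
        ultimately show "\<exists>p. open_pat Om TX p \<and> matches p (ts!i) \<and>
         (\<forall>s'\<in>trms Om TX. matches p s' \<longrightarrow> (matches (rs!i) s' \<longleftrightarrow> matches (rs!i) (ts!i)))"
          using trms_App(2) by blast
      qed
      then obtain ps where ps: "length ps = length ts" "\<forall>i<length ts. open_pat Om TX (ps!i) \<and> matches (ps!i) (ts!i) \<and>
         (\<forall>s'\<in>trms Om TX. matches (ps!i) s' \<longrightarrow> (matches (rs!i) s' \<longleftrightarrow> matches (rs!i) (ts!i)))"
        unfolding Skolem_list_nth by blast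
      show ?thesis
      proof (intro exI[of _ "PApp W ps"] conjI ballI impI)
        show "open_pat Om TX (PApp W ps)" using ps W by (auto simp: in_set_conv_nth)
        show "matches (PApp W ps) (App f ts)" using ps W by (auto simp: list_all2_conv_all_nth)
        fix s' assume s'1: "s' \<in> trms Om TX" and "matches (PApp W ps) s'"
        then obtain g ss where s': "s' = App g ss" "g \<in> W" "list_all2 matches ps ss" by (auto dest: matches_PApp_D)
        have lss: "length ss = length ts" using s' ps by (auto dest: list_all2_lengthD)
        have ssin: "\<forall>s\<in>set ss. s \<in> trms Om TX" using s'1 s'(1) by (simp add: trms_App_iff)
        have eqv: "\<forall>i<length ts. matches (rs!i) (ss!i) \<longleftrightarrow> matches (rs!i) (ts!i)"
        proof (intro allI impI)
          fix i assume i: "i < length ts"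
          have "ss!i \<in> trms Om TX" using ssin i lss by simp
          moreover have "matches (ps!i) (ss!i)" using s'(3) i lss by (simp add: list_all2_conv_all_nth)
          ultimately show "matches (rs!i) (ss!i) \<longleftrightarrow> matches (rs!i) (ts!i)" using ps(2) i by blast
        qed
        have "list_all2 matches rs ss \<longleftrightarrow> list_all2 matches rs ts"
          using eqv len lss by (simp add: list_all2_conv_all_nth)
        moreover have "g \<in> B \<longleftrightarrow> f \<in> B" using W s'(2) by blast
        ultimately show "matches r s' \<longleftrightarrow> matches r (App f ts)"
          using s'(1) PApp by simp
      qed
    qed
  qed
qed

lemma clopen_const_finite:
  assumes "finite Q" "\<forall>r\<in>Q. clopen_pat Om TX r" "s \<in> trms Om TX"
  shows "\<exists>p. open_pat Om TX p \<and> matches p s \<and>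
     (\<forall>s'\<in>trms Om TX. matches p s' \<longrightarrow> (\<forall>r\<in>Q. matches r s' \<longleftrightarrow> matches r s))"
  using assms
proof (induction Q rule: finite_induct)
  case empty
  then show ?case using open_fullp matches_fullp by blast
next
  case (insert r Q)
  then obtain p where p: "open_pat Om TX p" "matches p s"
     "\<forall>s'\<in>trms Om TX. matches p s' \<longrightarrow> (\<forall>r\<in>Q. matches r s' \<longleftrightarrow> matches r s)" by auto
  obtain q where q: "open_pat Om TX q" "matches q s"
     "\<forall>s'\<in>trms Om TX. matches q s' \<longrightarrow> (matches r s' \<longleftrightarrow> matches r s)"
    using clopen_const[of s Om TX r] insert by auto
  obtain u where "open_pat Om TX u" "matches u s" "\<forall>s'. matches u s' \<longrightarrow> matches p s' \<and> matches q s'"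
    using pat_int[OF p(2) q(2) p(1) q(1)] by blast
  then show ?case using p q by blast
qed

lemma cont_discrete_nbhd:
  assumes "\<And>x. x \<in> topspace X \<Longrightarrow> F x \<in> A \<and> (\<exists>U. openin X U \<and> x \<in> U \<and> (\<forall>y\<in>U. F y = F x))"
  shows "continuous_map X (discrete_topology A) F"
proof -
  have A1: "F ` topspace X \<subseteq> topspace (discrete_topology A)"
  proof
    fix y assume "y \<in> F ` topspace X"
    then obtain x where "x \<in> topspace X" "y = F x" by blast
    then show "y \<in> topspace (discrete_topology A)" using assms[of x] by simp
  qed
  have A2: "openin X {x \<in> topspace X. F x \<in> V}" for V
  proof (rule openin_subopen[THEN iffD2], intro ballI)
    fix x assume x: "x \<in> {x \<in> topspace X. F x \<in> V}"
    then have "x \<in> topspace X" by blast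
    then obtain U where U: "openin X U" "x \<in> U" "\<forall>y\<in>U. F y = F x" using assms[of x] by blast
    have "U \<subseteq> topspace X" by (rule openin_subset[OF U(1)])
    then have "U \<subseteq> {x \<in> topspace X. F x \<in> V}" using x U(3) by auto
    then show "\<exists>T. openin X T \<and> x \<in> T \<and> T \<subseteq> {x \<in> topspace X. F x \<in> V}" using U by blast
  qed
  show ?thesis unfolding continuous_map using A1 A2 by blast
qed

lemma topalg_discrete_iff:
  "topalg Om (discrete_topology A) op \<longleftrightarrow>
    (\<forall>n f as. f \<in> topspace (Om n) \<and> length as = n \<and> set as \<subseteq> A \<longrightarrow>
       op f as \<in> A \<and> (\<exists>W. openin (Om n) W \<and> f \<in> W \<and> (\<forall>f'\<in>W. op f' as = op f as)))"
  (is "?L \<longleftrightarrow> ?R")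
proof
  assume L: ?L
  show ?R
  proof (intro allI impI)
    fix n f as assume a: "f \<in> topspace (Om n) \<and> length as = n \<and> set as \<subseteq> A"
    define P where "P = prod_topology (Om n) (product_topology (\<lambda>_. discrete_topology A) {..<n})"
    define F where "F = (\<lambda>(f, g). op f (map g [0..<n]))"
    define g where "g = restrict (\<lambda>i. as!i) {..<n}"
    have c: "continuous_map P (discrete_topology A) F"
      using L unfolding topalg_def F_def P_def by blast
    have mg: "map g [0..<n] = as" using a unfolding g_def by (auto intro: nth_equalityI)
    have gin: "(f, g) \<in> topspace P"
      using a unfolding g_def P_def by (auto simp: PiE_iff)
    have Fv: "F (f, g) = op f as" using mg by (simp add: F_def)
    have "F (f, g) \<in> topspace (discrete_topology A)"
      using continuous_map_image_subset_topspace[OF c] gin by blast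
    then have inA: "op f as \<in> A" using Fv by simp
    then have "openin (discrete_topology A) {op f as}" by simp
    then have op: "openin P {x \<in> topspace P. F x \<in> {op f as}}"
      using conjunct2[OF c[unfolded continuous_map]] by blast
    have "(f, g) \<in> {x \<in> topspace P. F x \<in> {op f as}}" using gin Fv by simp
    then obtain U V where UV: "openin (Om n) U" "f \<in> U" "g \<in> V" "U \<times> V \<subseteq> {x \<in> topspace P. F x \<in> {op f as}}"
      using op[unfolded P_def openin_prod_topology_alt, folded P_def, rule_format, of f g] by blast
    have "\<forall>f'\<in>U. op f' as = op f as"
    proof
      fix f' assume "f' \<in> U"
      then have "(f', g) \<in> U \<times> V" using UV by simp
      then have "F (f', g) = op f as" using UV(4) by blast
      then show "op f' as = op f as" using mg by (simp add: F_def)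
    qed
    then show "op f as \<in> A \<and> (\<exists>W. openin (Om n) W \<and> f \<in> W \<and> (\<forall>f'\<in>W. op f' as = op f as))"
      using UV inA by blast
  qed
next
  assume R: ?R
  show ?L unfolding topalg_def
  proof
    fix n
    show "continuous_map (prod_topology (Om n) (product_topology (\<lambda>_. discrete_topology A) {..<n})) (discrete_topology A)
        (\<lambda>(f, g). op f (map g [0..<n]))"
    proof (rule cont_discrete_nbhd)
      fix x assume x: "x \<in> topspace (prod_topology (Om n) (product_topology (\<lambda>_. discrete_topology A) {..<n}))"
      obtain f g where fg: "x = (f, g)" by (cases x)
      have "x \<in> topspace (Om n) \<times> PiE {..<n} (\<lambda>_. A)" using x by simp
      then have f: "f \<in> topspace (Om n)" and g: "g \<in> PiE {..<n} (\<lambda>_. A)" using fg by auto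
      have sa: "set (map g [0..<n]) \<subseteq> A"
      proof
        fix y assume "y \<in> set (map g [0..<n])"
        then obtain i where i: "i < n" "y = g i" by auto
        then show "y \<in> A" using g by (simp add: PiE_iff)
      qed
      have ln: "length (map g [0..<n]) = n" by simp
      obtain W where W: "openin (Om n) W" "f \<in> W" "\<forall>f'\<in>W. op f' (map g [0..<n]) = op f (map g [0..<n])"
        and inA: "op f (map g [0..<n]) \<in> A"
        using R[rule_format, of f n "map g [0..<n]", OF conjI[OF f conjI[OF ln sa]]] by blast
      have ge: "g \<in> extensional {..<n}" using g by (simp add: PiE_iff)
      have "{g} = PiE {..<n} (\<lambda>i. {g i})" using PiE_singleton[OF ge] by simp
      moreover have "openin (product_topology (\<lambda>_. discrete_topology A) {..<n}) (PiE {..<n} (\<lambda>i. {g i}))"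
      proof -
        have "\<forall>i\<in>{..<n}. openin (discrete_topology A) {g i}" using g by (auto simp: PiE_iff)
        moreover have "finite {i \<in> {..<n}. {g i} \<noteq> topspace (discrete_topology A)}" by simp
        ultimately show ?thesis by (simp add: openin_PiE_gen)
      qed
      ultimately have og: "openin (product_topology (\<lambda>_. discrete_topology A) {..<n}) {g}" by simp
      have oU: "openin (prod_topology (Om n) (product_topology (\<lambda>_. discrete_topology A) {..<n})) (W \<times> {g})"
        using W(1) og by (simp add: openin_prod_Times_iff)
      have "\<forall>y\<in>W \<times> {g}. (case y of (f, g) \<Rightarrow> op f (map g [0..<n])) = (case x of (f, g) \<Rightarrow> op f (map g [0..<n]))"
      proof
        fix y assume "y \<in> W \<times> {g}"
        then obtain f' where y: "y = (f', g)" "f' \<in> W" by blast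
        then show "(case y of (f, g) \<Rightarrow> op f (map g [0..<n])) = (case x of (f, g) \<Rightarrow> op f (map g [0..<n]))"
          using W(3) fg by simp
      qed
      then show "(case x of (f, g) \<Rightarrow> op f (map g [0..<n])) \<in> A \<and>
         (\<exists>U. openin (prod_topology (Om n) (product_topology (\<lambda>_. discrete_topology A) {..<n})) U \<and> x \<in> U \<and>
              (\<forall>y\<in>U. (case y of (f, g) \<Rightarrow> op f (map g [0..<n])) = (case x of (f, g) \<Rightarrow> op f (map g [0..<n]))))"
      proof -
        have "x \<in> W \<times> {g}" using fg W(2) by simp
        moreover have "(case x of (f, g) \<Rightarrow> op f (map g [0..<n])) \<in> A" using fg inA by simp
        ultimately show ?thesis using oU \<open>\<forall>y\<in>W \<times> {g}. _\<close> by blast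
      qed
    qed
  qed
qed

lemma transfer_alg:
  assumes "finite_discrete_alg Om A opA" "inj_on e A"
  shows "finite_discrete_alg Om (e ` A) (\<lambda>f xs. e (opA f (map (inv_into A e) xs)))"
proof -
  have fin: "finite (e ` A)" using assms(1) unfolding finite_discrete_alg_def by simp
  have R: "\<forall>n f as. f \<in> topspace (Om n) \<and> length as = n \<and> set as \<subseteq> A \<longrightarrow>
       opA f as \<in> A \<and> (\<exists>W. openin (Om n) W \<and> f \<in> W \<and> (\<forall>f'\<in>W. opA f' as = opA f as))"
    using assms(1) unfolding finite_discrete_alg_def topalg_discrete_iff by blast
  have "\<forall>n f xs. f \<in> topspace (Om n) \<and> length xs = n \<and> set xs \<subseteq> e ` A \<longrightarrow>
       e (opA f (map (inv_into A e) xs)) \<in> e ` A \<and> (\<exists>W. openin (Om n) W \<and> f \<in> W \<and>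
         (\<forall>f'\<in>W. e (opA f' (map (inv_into A e) xs)) = e (opA f (map (inv_into A e) xs))))"
  proof (intro allI impI)
    fix n f xs assume a: "f \<in> topspace (Om n) \<and> length xs = n \<and> set xs \<subseteq> e ` A"
    have s: "set (map (inv_into A e) xs) \<subseteq> A"
    proof
      fix y assume "y \<in> set (map (inv_into A e) xs)"
      then obtain x where "x \<in> set xs" "y = inv_into A e x" by auto
      then show "y \<in> A" using a inv_into_into[of x e A] by blast
    qed
    have l: "length (map (inv_into A e) xs) = n" using a by simp
    obtain W where W: "opA f (map (inv_into A e) xs) \<in> A" "openin (Om n) W" "f \<in> W"
      "\<forall>f'\<in>W. opA f' (map (inv_into A e) xs) = opA f (map (inv_into A e) xs)"
      using R[rule_format, of f n "map (inv_into A e) xs", OF conjI[OF conjunct1[OF a] conjI[OF l s]]] by blast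
    show "e (opA f (map (inv_into A e) xs)) \<in> e ` A \<and> (\<exists>W. openin (Om n) W \<and> f \<in> W \<and>
         (\<forall>f'\<in>W. e (opA f' (map (inv_into A e) xs)) = e (opA f (map (inv_into A e) xs))))"
    proof (intro conjI exI[of _ W])
      show "e (opA f (map (inv_into A e) xs)) \<in> e ` A" using W(1) by (rule imageI)
      show "openin (Om n) W" "f \<in> W" using W(2,3) by simp_all
      show "\<forall>f'\<in>W. e (opA f' (map (inv_into A e) xs)) = e (opA f (map (inv_into A e) xs))"
        using W(4) by (intro ballI) (rule arg_cong[where f=e], blast)
    qed
  qed
  then show ?thesis unfolding finite_discrete_alg_def topalg_discrete_iff using fin by blast
qed

lemma transfer_hom:
  assumes "cont_hom Om T opT (discrete_topology A) opA \<phi>" "inj_on e A"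
  shows "cont_hom Om T opT (discrete_topology (e ` A)) (\<lambda>f xs. e (opA f (map (inv_into A e) xs))) (e \<circ> \<phi>)"
  unfolding cont_hom_def
proof
  have c: "continuous_map T (discrete_topology A) \<phi>" using assms unfolding cont_hom_def by auto
  have "continuous_map (discrete_topology A) (discrete_topology (e ` A)) e"
    by (auto simp: continuous_map_from_discrete_topology)
  then show "continuous_map T (discrete_topology (e ` A)) (e \<circ> \<phi>)"
    using c by (rule continuous_map_compose[rotated])
  have im: "\<phi> ` topspace T \<subseteq> A" using c by (metis continuous_map_image_subset_topspace topspace_discrete_topology)
  show "is_hom Om T opT (\<lambda>f xs. e (opA f (map (inv_into A e) xs))) (e \<circ> \<phi>)"
    unfolding is_hom_def
  proof (intro allI impI)
    fix n f as assume a: "f \<in> topspace (Om n) \<and> length as = n \<and> set as \<subseteq> topspace T"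
    have eqm: "map (inv_into A e) (map (e \<circ> \<phi>) as) = map \<phi> as"
    proof -
      have "\<forall>x\<in>set as. \<phi> x \<in> A" using a im by blast
      then show ?thesis using assms(2) by (simp add: inv_into_f_f)
    qed
    have hom: "\<phi> (opT f as) = opA f (map \<phi> as)"
      using assms(1) a unfolding cont_hom_def is_hom_def by blast
    show "(e \<circ> \<phi>) (opT f as) = e (opA f (map (inv_into A e) (map (e \<circ> \<phi>) as)))"
      unfolding eqm comp_apply hom by (rule refl)
  qed
qed

lemma finite_discrete_stone:
  assumes "finite_discrete_alg Om A op"
  shows "stone_alg Om (discrete_topology A) op"
  unfolding stone_alg_def zero_dimensional_def t1_space_def
proof (intro conjI allI impI ballI)
  show "topalg Om (discrete_topology A) op" "compact_space (discrete_topology A)"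
    using assms unfolding finite_discrete_alg_def by (auto simp: compact_space_discrete_topology)
  show "Hausdorff_space (discrete_topology A)" by simp
  fix x y assume "x \<in> topspace (discrete_topology A)" "y \<in> topspace (discrete_topology A)" "x \<noteq> y"
  then show "\<exists>U. openin (discrete_topology A) U \<and> x \<in> U \<and> y \<notin> U"
    by (intro exI[of _ "{x}"]) simp
next
  fix U x assume "openin (discrete_topology A) U \<and> x \<in> U"
  then show "\<exists>C. openin (discrete_topology A) C \<and> closedin (discrete_topology A) C \<and> x \<in> C \<and> C \<subseteq> U"
    by (intro exI[of _ "{x}"]) auto
qed

primrec subpats :: "('x,'o) pat \<Rightarrow> ('x,'o) pat set" where
  "subpats (PVar A) = {PVar A}"
| "subpats (PApp B ps) = insert (PApp B ps) (\<Union> (set (map subpats ps)))"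

lemma finite_subpats: "finite (subpats q)"
  by (induction q) auto

lemma self_subpats: "q \<in> subpats q"
  by (cases q) auto

lemma subpats_trans: "r \<in> subpats q \<Longrightarrow> subpats r \<subseteq> subpats q"
  by (induction q) auto

lemma subpats_child: "PApp B ps \<in> subpats q \<Longrightarrow> p \<in> set ps \<Longrightarrow> p \<in> subpats q"
  using subpats_trans[of "PApp B ps" q] self_subpats[of p] by auto

lemma subpats_clopen: "clopen_pat Om TX q \<Longrightarrow> r \<in> subpats q \<Longrightarrow> clopen_pat Om TX r"
  by (induction q) auto

lemma clopen_sets_const:
  assumes "finite Bs" "\<forall>B\<in>Bs. openin X B \<and> closedin X B" "f \<in> topspace X"
  shows "\<exists>W. openin X W \<and> f \<in> W \<and> (\<forall>f'\<in>W. \<forall>B\<in>Bs. f' \<in> B \<longleftrightarrow> f \<in> B)"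
  using assms
proof (induction Bs rule: finite_induct)
  case empty
  then show ?case by (intro exI[of _ "topspace X"]) auto
next
  case (insert B Bs)
  have "\<exists>W. openin X W \<and> f \<in> W \<and> (\<forall>f'\<in>W. \<forall>B\<in>Bs. f' \<in> B \<longleftrightarrow> f \<in> B)"
    using insert.IH insert.prems by blast
  then obtain W where W: "openin X W" "f \<in> W" "\<forall>f'\<in>W. \<forall>B\<in>Bs. f' \<in> B \<longleftrightarrow> f \<in> B" by blast
  define V where "V = (if f \<in> B then B else topspace X - B)"
  have cB: "openin X B" "closedin X B" using insert.prems by auto
  have V1: "openin X V" using cB by (simp add: V_def openin_diff)
  have V2: "f \<in> V" using insert.prems by (simp add: V_def)
  have V3: "\<forall>f'\<in>V. f' \<in> B \<longleftrightarrow> f \<in> B" unfolding V_def by simp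
  have "openin X (W \<inter> V)" using W(1) V1 by blast
  moreover have "f \<in> W \<inter> V" using W(2) V2 by blast
  moreover have "\<forall>f'\<in>W \<inter> V. \<forall>B'\<in>insert B Bs. f' \<in> B' \<longleftrightarrow> f \<in> B'" using W(3) V3 by blast
  ultimately show ?case by blast
qed

definition qphi :: "('x,'o) pat set \<Rightarrow> ('x,'o) trm \<Rightarrow> ('x,'o) pat set" where
  "qphi Q s = {r \<in> Q. matches r s}"

definition qop :: "('x,'o) pat set \<Rightarrow> 'o \<Rightarrow> ('x,'o) pat set list \<Rightarrow> ('x,'o) pat set" where
  "qop Q f Ss = {r \<in> Q. case r of PVar _ \<Rightarrow> False
     | PApp B ps \<Rightarrow> f \<in> B \<and> length ps = length Ss \<and> (\<forall>j<length ps. ps!j \<in> Ss!j)}"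

lemma strong_sep:
  assumes Z: "zero_dimensional TX" "\<And>n. zero_dimensional (Om n)"
    and t: "t \<in> trms Om TX" and p: "open_pat Om TX p" "matches p t"
  shows "\<exists>(B::nat set) opB \<phi>. finite_discrete_alg Om B opB \<and>
     cont_hom Om (trm_topology Om TX) App (discrete_topology B) opB \<phi> \<and>
     (\<forall>s\<in>trms Om TX. \<phi> s = \<phi> t \<longrightarrow> matches p s)"
proof -
  obtain q where q: "clopen_pat Om TX q" "matches q t" "\<forall>s. matches q s \<longrightarrow> matches p s"
    using clopen_refine[of TX Om t p, OF Z t p] by blast
  define Q where "Q = subpats q"
  have fQ: "finite Q" unfolding Q_def by (rule finite_subpats)
  have cQ: "\<forall>r\<in>Q. clopen_pat Om TX r" unfolding Q_def using q(1) subpats_clopen by blast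
  have alg: "finite_discrete_alg Om (Pow Q) (qop Q)"
    unfolding finite_discrete_alg_def topalg_discrete_iff
  proof (intro conjI allI impI)
    show "finite (Pow Q)" using fQ by simp
    fix n f as assume a: "f \<in> topspace (Om n) \<and> length as = n \<and> set as \<subseteq> Pow Q"
    show "qop Q f as \<in> Pow Q" unfolding qop_def by auto
    define Bs where "Bs = (\<lambda>r. case r of PApp B ps \<Rightarrow> B | PVar A \<Rightarrow> {}) ` {r \<in> Q. \<exists>B ps. r = PApp B ps \<and> length ps = n}"
    have "finite Bs" unfolding Bs_def using fQ by auto
    moreover have "\<forall>B\<in>Bs. openin (Om n) B \<and> closedin (Om n) B"
      unfolding Bs_def using cQ by fastforce
    ultimately obtain W where W: "openin (Om n) W" "f \<in> W" "\<forall>f'\<in>W. \<forall>B\<in>Bs. f' \<in> B \<longleftrightarrow> f \<in> B"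
      using clopen_sets_const[of Bs "Om n" f] a by blast
    have "\<forall>f'\<in>W. qop Q f' as = qop Q f as"
    proof
      fix f' assume f': "f' \<in> W"
      have "\<And>B ps. PApp B ps \<in> Q \<Longrightarrow> length ps = n \<Longrightarrow> f' \<in> B \<longleftrightarrow> f \<in> B"
      proof -
        fix B ps assume "PApp B ps \<in> Q" "length ps = n"
        then have "B \<in> Bs" unfolding Bs_def by (auto intro!: image_eqI[of _ _ "PApp B ps"])
        then show "f' \<in> B \<longleftrightarrow> f \<in> B" using W f' by blast
      qed
      then show "qop Q f' as = qop Q f as"
        unfolding qop_def using a by (auto split: pat.splits)
    qed
    then show "\<exists>W. openin (Om n) W \<and> f \<in> W \<and> (\<forall>f'\<in>W. qop Q f' as = qop Q f as)"
      using W by blast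
  qed
  have hom: "cont_hom Om (trm_topology Om TX) App (discrete_topology (Pow Q)) (qop Q) (qphi Q)"
    unfolding cont_hom_def
  proof
    show "continuous_map (trm_topology Om TX) (discrete_topology (Pow Q)) (qphi Q)"
    proof (rule cont_discrete_nbhd)
      fix s assume "s \<in> topspace (trm_topology Om TX)"
      then have s: "s \<in> trms Om TX" by simp
      obtain p' where p': "open_pat Om TX p'" "matches p' s"
        "\<forall>s'\<in>trms Om TX. matches p' s' \<longrightarrow> (\<forall>r\<in>Q. matches r s' \<longleftrightarrow> matches r s)"
        using clopen_const_finite[OF fQ cQ s] by blast
      show "qphi Q s \<in> Pow Q \<and> (\<exists>U. openin (trm_topology Om TX) U \<and> s \<in> U \<and> (\<forall>y\<in>U. qphi Q y = qphi Q s))"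
        using p' s by (intro conjI exI[of _ "{s' \<in> trms Om TX. matches p' s'}"])
          (auto simp: qphi_def openin_pat)
    qed
    show "is_hom Om (trm_topology Om TX) App (qop Q) (qphi Q)"
      unfolding is_hom_def
    proof (intro allI impI)
      fix n f as
      have "\<And>r. r \<in> Q \<Longrightarrow> matches r (App f as) \<longleftrightarrow> (case r of PVar _ \<Rightarrow> False
         | PApp B ps \<Rightarrow> f \<in> B \<and> length ps = length (map (qphi Q) as) \<and> (\<forall>j<length ps. ps!j \<in> (map (qphi Q) as)!j))"
      proof -
        fix r assume r: "r \<in> Q"
        show "matches r (App f as) \<longleftrightarrow> (case r of PVar _ \<Rightarrow> False
         | PApp B ps \<Rightarrow> f \<in> B \<and> length ps = length (map (qphi Q) as) \<and> (\<forall>j<length ps. ps!j \<in> (map (qphi Q) as)!j))"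
        proof (cases r)
          case (PVar A) then show ?thesis by simp
        next
          case (PApp B ps)
          have "\<forall>j<length ps. ps!j \<in> Q" using r PApp subpats_child unfolding Q_def by (metis nth_mem)
          then show ?thesis using PApp by (auto simp: list_all2_conv_all_nth qphi_def)
        qed
      qed
      then show "qphi Q (App f as) = qop Q f (map (qphi Q) as)"
        unfolding qop_def by (auto simp: qphi_def)
    qed
  qed
  obtain e and N :: nat where e: "e ` Pow Q = {i. i < N}" "inj_on e (Pow Q)"
    using finite_imp_inj_to_nat_seg[of "Pow Q"] fQ by auto
  show ?thesis
  proof (intro exI conjI)
    show "finite_discrete_alg Om (e ` Pow Q) (\<lambda>f xs. e (qop Q f (map (inv_into (Pow Q) e) xs)))"
      by (rule transfer_alg[OF alg e(2)])
    show "cont_hom Om (trm_topology Om TX) App (discrete_topology (e ` Pow Q)) (\<lambda>f xs. e (qop Q f (map (inv_into (Pow Q) e) xs))) (e \<circ> qphi Q)"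
      by (rule transfer_hom[OF hom e(2)])
    show "\<forall>s\<in>trms Om TX. (e \<circ> qphi Q) s = (e \<circ> qphi Q) t \<longrightarrow> matches p s"
    proof (intro ballI impI)
      fix s assume s: "s \<in> trms Om TX" "(e \<circ> qphi Q) s = (e \<circ> qphi Q) t"
      then have "qphi Q s = qphi Q t" using e(2) unfolding inj_on_def qphi_def by auto
      moreover have "q \<in> qphi Q t" using q self_subpats unfolding qphi_def Q_def by auto
      ultimately show "matches p s" using q unfolding qphi_def by auto
    qed
  qed
qed

lemma zd_t1: "zero_dimensional X \<Longrightarrow> t1_space X"
  unfolding zero_dimensional_def by auto

lemma resid_fin:
  assumes Z: "zero_dimensional TX" "\<And>n. zero_dimensional (Om n)"
  shows "residually_finite Om (trm_topology Om TX) App"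
  unfolding residually_finite_def
proof (intro ballI impI)
  have T1: "\<And>n. t1_space (Om n)" by (rule zd_t1[OF Z(2)])
  fix a b assume a: "a \<in> topspace (trm_topology Om TX)" and b: "b \<in> topspace (trm_topology Om TX)" and ab: "a \<noteq> b"
  obtain p where p: "open_pat Om TX p" "matches p a" "\<not> matches p b"
    using pat_sep[of TX Om a b, OF zd_t1[OF Z(1)] T1] a b ab by auto
  obtain B :: "nat set" and opB \<phi> where B: "finite_discrete_alg Om B opB"
     "cont_hom Om (trm_topology Om TX) App (discrete_topology B) opB \<phi>"
     "\<forall>s\<in>trms Om TX. \<phi> s = \<phi> a \<longrightarrow> matches p s"
    using strong_sep[of TX Om a p, OF Z] a p by auto
  have "\<phi> a \<noteq> \<phi> b"
  proof
    assume "\<phi> a = \<phi> b"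
    then have "matches p b" using B(3) b by simp
    then show False using p(3) by simp
  qed
  then show "\<exists>(B :: nat set) opB h. finite_discrete_alg Om B opB \<and>
             cont_hom Om (trm_topology Om TX) App (discrete_topology B) opB h \<and> h a \<noteq> h b"
    using B(1,2) by blast
qed

primrec ev :: "('x \<Rightarrow> 'f) \<Rightarrow> ('o \<Rightarrow> 'f list \<Rightarrow> 'f) \<Rightarrow> ('x,'o) trm \<Rightarrow> 'f" where
  "ev \<iota> opF (Var x) = \<iota> x"
| "ev \<iota> opF (App f ts) = opF f (map (ev \<iota> opF) ts)"

lemma topalg_closed:
  assumes "topalg Om TA opA" "f \<in> topspace (Om n)" "length as = n" "set as \<subseteq> topspace TA"
  shows "opA f as \<in> topspace TA"
proof -
  define g where "g = restrict (\<lambda>i. as!i) {..<n}"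
  have c: "continuous_map (prod_topology (Om n) (product_topology (\<lambda>_. TA) {..<n})) TA (\<lambda>(f, g). opA f (map g [0..<n]))"
    using assms(1) unfolding topalg_def by blast
  have mg: "map g [0..<n] = as" using assms unfolding g_def by (auto intro: nth_equalityI)
  have gin: "(f, g) \<in> topspace (prod_topology (Om n) (product_topology (\<lambda>_. TA) {..<n}))"
    using assms unfolding g_def by (auto simp: PiE_iff)
  show ?thesis using continuous_map_image_subset_topspace[OF c] gin mg by force
qed

lemma ev_in:
  assumes "topalg Om TF opF" "continuous_map TX TF \<iota>"
  shows "t \<in> trms Om TX \<Longrightarrow> ev \<iota> opF t \<in> topspace TF"
proof (induction t rule: trms.induct)
  case (trms_Var x)
  then show ?case using assms(2) by (auto simp: continuous_map_def)
next
  case (trms_App f ts)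
  then show ?case using topalg_closed[OF assms(1), of f "length ts" "map (ev \<iota> opF) ts"] by auto
qed

lemma ev_nbhd:
  assumes A: "topalg Om TF opF" "continuous_map TX TF \<iota>"
  shows "t \<in> trms Om TX \<Longrightarrow> openin TF V \<Longrightarrow> ev \<iota> opF t \<in> V \<Longrightarrow>
    \<exists>p. open_pat Om TX p \<and> matches p t \<and> (\<forall>s\<in>trms Om TX. matches p s \<longrightarrow> ev \<iota> opF s \<in> V)"
proof (induction t arbitrary: V rule: trms.induct)
  case (trms_Var x)
  define U where "U = {y \<in> topspace TX. \<iota> y \<in> V}"
  have "openin TX U" using A(2) trms_Var unfolding U_def continuous_map_def by auto
  moreover have "x \<in> U" using trms_Var unfolding U_def by simp
  moreover have "\<forall>s\<in>trms Om TX. matches (PVar U) s \<longrightarrow> ev \<iota> opF s \<in> V"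
    unfolding U_def by (auto dest!: matches_PVar_D)
  ultimately show ?case by (intro exI[of _ "PVar U"]) simp
next
  case (trms_App f ts)
  define n where "n = length ts"
  define F where "F = (\<lambda>(f, g). opF f (map g [0..<n]))"
  define g0 where "g0 = restrict (\<lambda>i. ev \<iota> opF (ts!i)) {..<n}"
  have c: "continuous_map (prod_topology (Om n) (product_topology (\<lambda>_. TF) {..<n})) TF F"
    using A(1) unfolding topalg_def F_def by blast
  have tsin: "\<forall>s\<in>set ts. ev \<iota> opF s \<in> topspace TF" using trms_App ev_in[OF A] by auto
  have mg: "map g0 [0..<n] = map (ev \<iota> opF) ts" unfolding g0_def n_def by (auto intro: nth_equalityI)
  define P where "P = prod_topology (Om n) (product_topology (\<lambda>_. TF) {..<n})"
  have g0in: "g0 \<in> PiE {..<n} (\<lambda>_. topspace TF)"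
  proof -
    have "\<forall>i<n. ev \<iota> opF (ts!i) \<in> topspace TF" using tsin n_def by simp
    then show ?thesis unfolding g0_def by (simp add: PiE_iff)
  qed
  have gin: "(f, g0) \<in> topspace P"
    using trms_App(1) g0in unfolding P_def n_def by simp
  have Fv: "F (f, g0) \<in> V" using mg trms_App.prems(2) by (simp add: F_def)
  have op: "openin P {x \<in> topspace P. F x \<in> V}"
    using conjunct2[OF c[unfolded continuous_map, folded P_def]] trms_App.prems(1) by blast
  have "(f, g0) \<in> {x \<in> topspace P. F x \<in> V}" using gin Fv by simp
  then obtain U G where UG: "openin (Om n) U" "openin (product_topology (\<lambda>_. TF) {..<n}) G" "f \<in> U" "g0 \<in> G"
      "U \<times> G \<subseteq> {x \<in> topspace P. F x \<in> V}"
    using op[unfolded P_def openin_prod_topology_alt, folded P_def, rule_format, of f g0] by blast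
  obtain Us where Us: "\<forall>i\<in>{..<n}. openin TF (Us i)" "g0 \<in> PiE {..<n} Us" "PiE {..<n} Us \<subseteq> G"
    using UG(2)[unfolded openin_product_topology_alt, rule_format, OF UG(4)] by blast
  have "\<forall>i<n. \<exists>p. open_pat Om TX p \<and> matches p (ts!i) \<and> (\<forall>s\<in>trms Om TX. matches p s \<longrightarrow> ev \<iota> opF s \<in> Us i)"
  proof (intro allI impI)
    fix i assume i: "i < n"
    have "ts!i \<in> set ts" using i n_def by auto
    moreover have "ev \<iota> opF (ts!i) \<in> Us i"
    proof -
      have "g0 i \<in> Us i" using Us(2) i by (simp add: PiE_iff)
      then show ?thesis using i unfolding g0_def by simp
    qed
    ultimately show "\<exists>p. open_pat Om TX p \<and> matches p (ts!i) \<and> (\<forall>s\<in>trms Om TX. matches p s \<longrightarrow> ev \<iota> opF s \<in> Us i)"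
      using trms_App(2) Us(1) i by blast
  qed
  then obtain ps where ps: "length ps = n" "\<forall>i<n. open_pat Om TX (ps!i) \<and> matches (ps!i) (ts!i) \<and> (\<forall>s\<in>trms Om TX. matches (ps!i) s \<longrightarrow> ev \<iota> opF s \<in> Us i)"
    unfolding Skolem_list_nth by blast
  show ?case
  proof (intro exI[of _ "PApp U ps"] conjI ballI impI)
    show "open_pat Om TX (PApp U ps)" using ps UG by (auto simp: in_set_conv_nth)
    show "matches (PApp U ps) (App f ts)" using ps UG n_def by (auto simp: list_all2_conv_all_nth)
    fix s assume s1: "s \<in> trms Om TX" and "matches (PApp U ps) s"
    then obtain g ss where s: "s = App g ss" "g \<in> U" "list_all2 matches ps ss" by (auto dest: matches_PApp_D)
    have lss: "length ss = n" using s ps by (auto dest: list_all2_lengthD)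
    define g1 where "g1 = restrict (\<lambda>i. ev \<iota> opF (ss!i)) {..<n}"
    have ssin: "\<forall>s\<in>set ss. s \<in> trms Om TX" using s1 s(1) by (simp add: trms_App_iff)
    have "\<forall>i<n. ev \<iota> opF (ss!i) \<in> Us i"
    proof (intro allI impI)
      fix i assume i: "i < n"
      have "ss!i \<in> trms Om TX" using ssin i lss by simp
      moreover have "matches (ps!i) (ss!i)" using s(3) i lss by (simp add: list_all2_conv_all_nth)
      ultimately show "ev \<iota> opF (ss!i) \<in> Us i" using ps(2) i by blast
    qed
    then have "g1 \<in> PiE {..<n} Us" unfolding g1_def by (simp add: PiE_iff)
    then have "(g, g1) \<in> U \<times> G" using Us(3) s(2) by blast
    then have "F (g, g1) \<in> V" using UG(5) by blast
    moreover have "map g1 [0..<n] = map (ev \<iota> opF) ss" unfolding g1_def using lss by (auto intro: nth_equalityI)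
    ultimately show "ev \<iota> opF s \<in> V" using s by (simp add: F_def)
  qed
qed

lemma ev_cont:
  assumes A: "topalg Om TF opF" "continuous_map TX TF \<iota>"
  shows "continuous_map (trm_topology Om TX) TF (ev \<iota> opF)"
  unfolding continuous_map
proof (intro conjI allI impI)
  show "ev \<iota> opF ` topspace (trm_topology Om TX) \<subseteq> topspace TF" using ev_in[OF A] by auto
  fix V assume V: "openin TF V"
  show "openin (trm_topology Om TX) {x \<in> topspace (trm_topology Om TX). ev \<iota> opF x \<in> V}"
    unfolding openin_trm using ev_nbhd[OF A _ V] by fastforce
qed

lemma var_cont: "continuous_map TX (trm_topology Om TX) Var"
  unfolding continuous_map
proof (intro conjI allI impI)
  show "Var ` topspace TX \<subseteq> topspace (trm_topology Om TX)" by (auto simp: trms_Var_iff)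
  fix U assume U: "openin (trm_topology Om TX) U"
  show "openin TX {x \<in> topspace TX. Var x \<in> U}"
    proof (rule openin_subopen[THEN iffD2], intro ballI)
    fix x assume x: "x \<in> {x \<in> topspace TX. Var x \<in> U}"
    then obtain p where p: "open_pat Om TX p" "matches p (Var x)" "{s \<in> trms Om TX. matches p s} \<subseteq> U"
      using U unfolding openin_trm by blast
    then obtain A where A: "p = PVar A" "x \<in> A" "openin TX A" by (cases p) auto
    have "A \<subseteq> {x \<in> topspace TX. Var x \<in> U}"
    proof
      fix y assume y: "y \<in> A"
      then have yt: "y \<in> topspace TX" using openin_subset[OF A(3)] by blast
      then have "Var y \<in> {s \<in> trms Om TX. matches p s}" using y A(1) by (simp add: trms_Var_iff)
      then show "y \<in> {x \<in> topspace TX. Var x \<in> U}" using p(3) yt by blast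
    qed
    then show "\<exists>T. openin TX T \<and> x \<in> T \<and> T \<subseteq> {x \<in> topspace TX. Var x \<in> U}" using A by blast
  qed
qed

lemma hom_unique:
  assumes "is_hom Om (trm_topology Om TX) App opB h" "is_hom Om (trm_topology Om TX) App opB h'"
    "\<forall>x\<in>topspace TX. h (Var x) = h' (Var x)"
  shows "t \<in> trms Om TX \<Longrightarrow> h t = h' t"
proof (induction t rule: trms.induct)
  case (trms_Var x)
  then show ?case using assms(3) by auto
next
  case (trms_App f ts)
  have st: "set ts \<subseteq> trms Om TX" using trms_App(2) by blast
  have "h (App f ts) = opB f (map h ts)"
    using assms(1)[unfolded is_hom_def, rule_format, of f "length ts" ts] trms_App(1) st by simp
  moreover have "h' (App f ts) = opB f (map h' ts)"
    using assms(2)[unfolded is_hom_def, rule_format, of f "length ts" ts] trms_App(1) st by simp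
  moreover have "map h ts = map h' ts" using trms_App by auto
  ultimately show ?case by simp
qed

lemma is_hom_comp:
  assumes "is_hom Om TA opA opB h" "h ` topspace TA \<subseteq> topspace TB" "is_hom Om TB opB opC k"
  shows "is_hom Om TA opA opC (k \<circ> h)"
  unfolding is_hom_def
proof (intro allI impI)
  fix n f as assume a: "f \<in> topspace (Om n) \<and> length as = n \<and> set as \<subseteq> topspace TA"
  have "h (opA f as) = opB f (map h as)"
    using assms(1)[unfolded is_hom_def, rule_format, of f n as] a by blast
  moreover have "set (map h as) \<subseteq> topspace TB" using a assms(2) by auto
  then have "k (opB f (map h as)) = opC f (map k (map h as))"
    using assms(3)[unfolded is_hom_def, rule_format, of f n "map h as"] a by simp
  ultimately show "(k \<circ> h) (opA f as) = opC f (map (k \<circ> h) as)" by simp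
qed

lemma factor:
  fixes TF :: "'f topology" and \<iota> :: "'x \<Rightarrow> 'f" and B :: "nat set"
  assumes U: "infinite (UNIV :: 'u set)"
    and F: "free_stone_alg_wrt TYPE('u) Om TX TF opF \<iota>"
    and h: "cont_hom Om (trm_topology Om TX) App TF opF h" "\<forall>x\<in>topspace TX. h (Var x) = \<iota> x"
    and B: "finite_discrete_alg Om B opB" "cont_hom Om (trm_topology Om TX) App (discrete_topology B) opB \<phi>"
  shows "\<exists>(e :: nat \<Rightarrow> 'u) \<psi>. inj e \<and> continuous_map TF (discrete_topology (e ` B)) \<psi> \<and>
     (\<forall>s\<in>trms Om TX. \<psi> (h s) = e (\<phi> s))"
proof -
  obtain e :: "nat \<Rightarrow> 'u" where e: "inj e" using infinite_countable_subset[OF U] by blast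
  define opE where "opE = (\<lambda>f xs. e (opB f (map (inv_into B e) xs)))"
  have E: "finite_discrete_alg Om (e ` B) opE" unfolding opE_def
    by (rule transfer_alg[OF B(1)]) (use e in \<open>auto simp: inj_on_def\<close>)
  have Eh: "cont_hom Om (trm_topology Om TX) App (discrete_topology (e ` B)) opE (e \<circ> \<phi>)" unfolding opE_def
    by (rule transfer_hom[OF B(2)]) (use e in \<open>auto simp: inj_on_def\<close>)
  have st: "stone_alg Om (discrete_topology (e ` B)) opE" by (rule finite_discrete_stone[OF E])
  have cE: "continuous_map (trm_topology Om TX) (discrete_topology (e ` B)) (e \<circ> \<phi>)"
    using Eh unfolding cont_hom_def by blast
  have cv: "continuous_map TX (discrete_topology (e ` B)) ((e \<circ> \<phi>) \<circ> Var)"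
    by (rule continuous_map_compose[OF var_cont[of TX Om] cE])
  have univ: "\<forall>(TT :: 'u topology) opT \<phi>. stone_alg Om TT opT \<and> continuous_map TX TT \<phi> \<longrightarrow>
        (\<exists>h. cont_hom Om TF opF TT opT h \<and> (\<forall>x\<in>topspace TX. h (\<iota> x) = \<phi> x) \<and>
           (\<forall>h'. cont_hom Om TF opF TT opT h' \<and> (\<forall>x\<in>topspace TX. h' (\<iota> x) = \<phi> x) \<longrightarrow>
                 (\<forall>y\<in>topspace TF. h' y = h y)))"
    using F unfolding free_stone_alg_wrt_def by blast
  obtain \<psi> where \<psi>: "cont_hom Om TF opF (discrete_topology (e ` B)) opE \<psi>"
    "\<forall>x\<in>topspace TX. \<psi> (\<iota> x) = ((e \<circ> \<phi>) \<circ> Var) x"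
    using univ[rule_format, of "discrete_topology (e ` B)" opE "(e \<circ> \<phi>) \<circ> Var", OF conjI[OF st cv]] by blast
  have him: "h ` topspace (trm_topology Om TX) \<subseteq> topspace TF"
    using h(1) unfolding cont_hom_def by (meson continuous_map_image_subset_topspace)
  have hh: "is_hom Om (trm_topology Om TX) App opF h" using h(1) unfolding cont_hom_def by blast
  have hp: "is_hom Om TF opF opE \<psi>" using \<psi>(1) unfolding cont_hom_def by blast
  have hc: "is_hom Om (trm_topology Om TX) App opE (\<psi> \<circ> h)"
    by (rule is_hom_comp[OF hh him hp])
  have he: "is_hom Om (trm_topology Om TX) App opE (e \<circ> \<phi>)" using Eh unfolding cont_hom_def by blast
  have agree: "\<forall>x\<in>topspace TX. (\<psi> \<circ> h) (Var x) = (e \<circ> \<phi>) (Var x)"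
    using h(2) \<psi>(2) by simp
  have "\<forall>s\<in>trms Om TX. (\<psi> \<circ> h) s = (e \<circ> \<phi>) s"
    using hom_unique[OF hc he agree] by blast
  moreover have "continuous_map TF (discrete_topology (e ` B)) \<psi>" using \<psi>(1) unfolding cont_hom_def by blast
  ultimately show ?thesis using e by auto
qed

theorem proposition4p7:
  fixes Om :: "nat \<Rightarrow> 'o topology" and TX :: "'x topology"
    and TF :: "'f topology" and opF :: "'o \<Rightarrow> 'f list \<Rightarrow> 'f" and \<iota> :: "'x \<Rightarrow> 'f"
  assumes "zero_dimensional TX"
    and "\<And>n. zero_dimensional (Om n)"
    and "infinite (UNIV :: 'u set)"
    and "free_stone_alg_wrt TYPE('u) Om TX TF opF \<iota>"
  shows "residually_finite Om (trm_topology Om TX) App \<and>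
    (\<exists>h. cont_hom Om (trm_topology Om TX) App TF opF h \<and> (\<forall>x\<in>topspace TX. h (Var x) = \<iota> x)) \<and>
    (\<forall>h h'. cont_hom Om (trm_topology Om TX) App TF opF h \<and> (\<forall>x\<in>topspace TX. h (Var x) = \<iota> x)
       \<and> cont_hom Om (trm_topology Om TX) App TF opF h' \<and> (\<forall>x\<in>topspace TX. h' (Var x) = \<iota> x)
       \<longrightarrow> (\<forall>t\<in>topspace (trm_topology Om TX). h t = h' t)) \<and>
    (\<forall>h. cont_hom Om (trm_topology Om TX) App TF opF h \<and> (\<forall>x\<in>topspace TX. h (Var x) = \<iota> x)
       \<longrightarrow> inj_on h (topspace (trm_topology Om TX)) \<and>
           h ` topspace (trm_topology Om TX) = gen_sub Om opF (\<iota> ` topspace TX) \<and>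
           homeomorphic_map (trm_topology Om TX)
              (subtopology TF (gen_sub Om opF (\<iota> ` topspace TX))) h)"
proof -
  note Z = assms(1,2)
  have T1: "\<And>n. t1_space (Om n)" by (rule zd_t1[OF Z(2)])
  have st: "stone_alg Om TF opF" and ci: "continuous_map TX TF \<iota>"
    using assms(4) unfolding free_stone_alg_wrt_def by auto
  have ta: "topalg Om TF opF" using st unfolding stone_alg_def by auto
  define G where "G = gen_sub Om opF (\<iota> ` topspace TX)"
  have P1: "residually_finite Om (trm_topology Om TX) App" by (rule resid_fin[of TX Om, OF Z])
  have P2: "cont_hom Om (trm_topology Om TX) App TF opF (ev \<iota> opF) \<and> (\<forall>x\<in>topspace TX. ev \<iota> opF (Var x) = \<iota> x)"
    unfolding cont_hom_def is_hom_def using ev_cont[OF ta ci] by auto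
  have P3: "\<forall>h h'. cont_hom Om (trm_topology Om TX) App TF opF h \<and> (\<forall>x\<in>topspace TX. h (Var x) = \<iota> x)
       \<and> cont_hom Om (trm_topology Om TX) App TF opF h' \<and> (\<forall>x\<in>topspace TX. h' (Var x) = \<iota> x)
       \<longrightarrow> (\<forall>t\<in>topspace (trm_topology Om TX). h t = h' t)"
  proof (intro allI impI)
    fix h h' assume a: "cont_hom Om (trm_topology Om TX) App TF opF h \<and> (\<forall>x\<in>topspace TX. h (Var x) = \<iota> x)
       \<and> cont_hom Om (trm_topology Om TX) App TF opF h' \<and> (\<forall>x\<in>topspace TX. h' (Var x) = \<iota> x)"
    have h1: "is_hom Om (trm_topology Om TX) App opF h" "is_hom Om (trm_topology Om TX) App opF h'"
      using a unfolding cont_hom_def by blast+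
    have "\<forall>x\<in>topspace TX. h (Var x) = h' (Var x)" using a by simp
    then show "\<forall>t\<in>topspace (trm_topology Om TX). h t = h' t"
      using hom_unique[OF h1] by simp
  qed
  have P4: "inj_on h (topspace (trm_topology Om TX)) \<and>
           h ` topspace (trm_topology Om TX) = G \<and>
           homeomorphic_map (trm_topology Om TX) (subtopology TF G) h"
    if h: "cont_hom Om (trm_topology Om TX) App TF opF h" "\<forall>x\<in>topspace TX. h (Var x) = \<iota> x" for h
  proof -
    have hc: "continuous_map (trm_topology Om TX) TF h" and hh: "is_hom Om (trm_topology Om TX) App opF h"
      using h unfolding cont_hom_def by auto
    have him: "h ` trms Om TX \<subseteq> topspace TF"
      using continuous_map_image_subset_topspace[OF hc] by simp
    have inj: "inj_on h (trms Om TX)"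
    proof (rule inj_onI, rule ccontr)
      fix a b assume a: "a \<in> trms Om TX" and b: "b \<in> trms Om TX" and hab: "h a = h b" and ab: "a \<noteq> b"
      obtain p where p: "open_pat Om TX p" "matches p a" "\<not> matches p b"
        using pat_sep[of TX Om a b, OF zd_t1[OF Z(1)] T1] a b ab by blast
      obtain B :: "nat set" and opB \<phi> where B: "finite_discrete_alg Om B opB"
         "cont_hom Om (trm_topology Om TX) App (discrete_topology B) opB \<phi>"
         "\<forall>s\<in>trms Om TX. \<phi> s = \<phi> a \<longrightarrow> matches p s"
        using strong_sep[of TX Om a p, OF Z a p(1,2)] by blast
      obtain e :: "nat \<Rightarrow> 'u" and \<psi> where e: "inj e" "\<forall>s\<in>trms Om TX. \<psi> (h s) = e (\<phi> s)"
        using factor[OF assms(3,4) h B(1,2)] by blast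
      have "e (\<phi> a) = \<psi> (h a)" using e(2) a by simp
      also have "\<dots> = \<psi> (h b)" using hab by simp
      also have "\<dots> = e (\<phi> b)" using e(2) b by simp
      finally have "e (\<phi> a) = e (\<phi> b)" .
      then have "\<phi> b = \<phi> a" using e(1) by (simp add: inj_eq)
      then show False using B(3) b p by blast
    qed
    have img: "h ` trms Om TX = G"
    proof
      show "h ` trms Om TX \<subseteq> G"
      proof
        fix y assume "y \<in> h ` trms Om TX"
        then obtain t where t: "t \<in> trms Om TX" "y = h t" by blast
        have "h t \<in> G" using t(1)
        proof (induction t rule: trms.induct)
          case (trms_Var x)
          then show ?case using h(2) unfolding G_def by (auto intro: gen_sub.gen_base)
        next
          case (trms_App f ts)
          have st: "set ts \<subseteq> trms Om TX" using trms_App(2) by blast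
          have "h (App f ts) = opF f (map h ts)"
            using hh[unfolded is_hom_def, rule_format, of f "length ts" ts] trms_App(1) st by simp
          moreover have "opF f (map h ts) \<in> G" unfolding G_def
            by (rule gen_sub.gen_op) (use trms_App in \<open>auto simp: G_def\<close>)
          ultimately show ?case by simp
        qed
        then show "y \<in> G" using t by simp
      qed
      show "G \<subseteq> h ` trms Om TX"
      proof
        fix y assume "y \<in> G"
        then show "y \<in> h ` trms Om TX" unfolding G_def
        proof (induction y rule: gen_sub.induct)
          case (gen_base y)
          then obtain x where "x \<in> topspace TX" "y = \<iota> x" by auto
          then show ?case using h(2) by (auto simp: trms_Var_iff intro!: image_eqI[of _ _ "Var x"])
        next
          case (gen_op f as)
          have "\<forall>i<length as. \<exists>t. t \<in> trms Om TX \<and> h t = as!i"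
            using gen_op(2) by (metis imageE nth_mem)
          then obtain ts where ts: "length ts = length as" "\<forall>i<length as. ts!i \<in> trms Om TX \<and> h (ts!i) = as!i"
            unfolding Skolem_list_nth by blast
          have mts: "map h ts = as" using ts by (auto intro: nth_equalityI)
          have tsin: "App f ts \<in> trms Om TX" using ts gen_op(1) by (auto simp: trms_App_iff in_set_conv_nth)
          have st: "set ts \<subseteq> trms Om TX" using tsin by (simp add: trms_App_iff subset_iff)
          have "h (App f ts) = opF f (map h ts)"
            using hh[unfolded is_hom_def, rule_format, of f "length ts" ts] tsin st
            by (simp add: trms_App_iff)
          then show ?case using mts tsin by force
        qed
      qed
    qed
    have GT: "G \<subseteq> topspace TF" using img him by auto
    have tsG: "topspace (subtopology TF G) = G" using GT by auto
    have om: "open_map (trm_topology Om TX) (subtopology TF G) h"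
      unfolding open_map_def
    proof (intro allI impI)
      fix U assume U: "openin (trm_topology Om TX) U"
      show "openin (subtopology TF G) (h ` U)"
        proof (rule openin_subopen[THEN iffD2], intro ballI)
        fix y assume "y \<in> h ` U"
        then obtain t where t: "t \<in> U" "y = h t" by blast
        obtain p where p: "open_pat Om TX p" "matches p t" "{s \<in> trms Om TX. matches p s} \<subseteq> U"
          using U t unfolding openin_trm by blast
        have tt: "t \<in> trms Om TX" using openin_subset[OF U] t(1) by simp blast
        obtain B :: "nat set" and opB \<phi> where B: "finite_discrete_alg Om B opB"
           "cont_hom Om (trm_topology Om TX) App (discrete_topology B) opB \<phi>"
           "\<forall>s\<in>trms Om TX. \<phi> s = \<phi> t \<longrightarrow> matches p s"
          using strong_sep[of TX Om t p, OF Z tt p(1,2)] by blast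
        obtain e :: "nat \<Rightarrow> 'u" and \<psi> where e: "inj e" "continuous_map TF (discrete_topology (e ` B)) \<psi>"
           "\<forall>s\<in>trms Om TX. \<psi> (h s) = e (\<phi> s)"
          using factor[OF assms(3,4) h B(1,2)] by blast
        have cphi: "continuous_map (trm_topology Om TX) (discrete_topology B) \<phi>"
          using B(2) unfolding cont_hom_def by (rule conjunct1)
        have "\<phi> t \<in> topspace (discrete_topology B)"
          using continuous_map_image_subset_topspace[OF cphi] tt by (simp add: image_subset_iff)
        then have "\<phi> t \<in> B" by simp
        then have oe: "openin (discrete_topology (e ` B)) {e (\<phi> t)}" by simp
        have O: "openin TF {z \<in> topspace TF. \<psi> z \<in> {e (\<phi> t)}}"
          by (rule conjunct2[OF e(2)[unfolded continuous_map], rule_format, OF oe])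
        define Ob where "Ob = {z \<in> topspace TF. \<psi> z \<in> {e (\<phi> t)}}"
        have "openin (subtopology TF G) (Ob \<inter> G)"
          using O unfolding Ob_def openin_subtopology by blast
        moreover have "y \<in> Ob \<inter> G"
        proof -
          have "h t \<in> topspace TF" using him tt by blast
          moreover have "\<psi> (h t) = e (\<phi> t)" using e(3) tt by blast
          moreover have "h t \<in> G" using img tt by blast
          ultimately show ?thesis unfolding Ob_def using t(2) by simp
        qed
        moreover have "Ob \<inter> G \<subseteq> h ` U"
        proof
          fix z assume z: "z \<in> Ob \<inter> G"
          then have "z \<in> h ` trms Om TX" using img by simp
          then obtain s where s: "s \<in> trms Om TX" "z = h s" by blast
          have "\<psi> z = e (\<phi> t)" using z unfolding Ob_def by simp
          then have "e (\<phi> s) = e (\<phi> t)" using e(3) s by simp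
          then have "\<phi> s = \<phi> t" using e(1) by (simp add: inj_eq)
          then have "s \<in> U" using B(3) s p by blast
          then show "z \<in> h ` U" using s(2) by blast
        qed
        ultimately show "\<exists>T. openin (subtopology TF G) T \<and> y \<in> T \<and> T \<subseteq> h ` U" by blast
      qed
    qed
    have "homeomorphic_map (trm_topology Om TX) (subtopology TF G) h"
    proof (rule bijective_open_imp_homeomorphic_map)
      show "continuous_map (trm_topology Om TX) (subtopology TF G) h"
      proof (rule continuous_map_into_subtopology[OF hc])
        show "h \<in> topspace (trm_topology Om TX) \<rightarrow> G" using img by auto
      qed
      show "open_map (trm_topology Om TX) (subtopology TF G) h" by (rule om)
      show "h ` topspace (trm_topology Om TX) = topspace (subtopology TF G)" using img tsG by simp
      show "inj_on h (topspace (trm_topology Om TX))" using inj by simp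
    qed
    then show ?thesis using inj img by simp
  qed
  have P4': "\<forall>h. cont_hom Om (trm_topology Om TX) App TF opF h \<and> (\<forall>x\<in>topspace TX. h (Var x) = \<iota> x)
       \<longrightarrow> inj_on h (topspace (trm_topology Om TX)) \<and>
           h ` topspace (trm_topology Om TX) = G \<and>
           homeomorphic_map (trm_topology Om TX) (subtopology TF G) h"
    using P4 by blast
  have P2': "\<exists>h. cont_hom Om (trm_topology Om TX) App TF opF h \<and> (\<forall>x\<in>topspace TX. h (Var x) = \<iota> x)"
    using P2 by blast
  show ?thesis using P1 P2' P3 P4'[unfolded G_def] by (intro conjI)
qed

end
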